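(* For any two systems $\mathfrak T_1$ and $\mathfrak T_2$, if $\mathfrak T_1\sim_{hpb}\mathfrak T_2$ then $\mathfrak T_1\sim_{\mathrm{c}\mu}\mathfrak T_2$.
   Context: A system (transition system with independence) is $\mathfrak T=(S,s_0,T,I,\Sigma)$: $S$ states, $s_0\in S$, $\Sigma$ labels, $T\subseteq S\times\Sigma\times S$, $I\subseteq T\times T$ irreflexive symmetric; for $t=(s,a,s')$, $\sigma(t)=s,\tau(t)=s',\delta(t)=a$. With $(s,a,s_1)\prec(s_2,a,q)$ iff $\exists b$: $(s,a,s_1)I(s,b,s_2)$, $(s,a,s_1)I(s_1,b,q)$, $(s,b,s_2)I(s_2,a,q)$, and $\sim$ the equivalence closure of $\prec$, the axioms are: (A1) $(s,a,s_1)\sim(s,a,s_2)\Rightarrow s_1=s_2$; (A2) $(s,a,s_1)I(s,b,s_2)\Rightarrow\exists q.\,(s,a,s_1)I(s_1,b,q)\wedge(s,b,s_2)I(s_2,a,q)$; (A3) $(s,a,s_1)I(s_1,b,q)\Rightarrow\exists s_2.\,(s,a,s_1)I(s,b,s_2)\wedge(s,b,s_2)I(s_2,a,q)$; (A4) $t\sim t'\Rightarrow\{u:tIu\}=\{u:t'Iu\}$. Systems are image-finite. Relations: $t\otimes t'$ iff $\sigma(t)=\sigma(t')\wedge tIt'$; $t\ominus t'$ iff $\tau(t)=\sigma(t')\wedge tIt'$; $t\le t'$ iff $\tau(t)=\sigma(t')\wedge\neg tIt'$. $\mathfrak X(s)$ = transitions with source $s$; a conflict-free set is a set of transitions with common source,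 pairwise $\otimes$; support sets are the $\mathfrak X(s)$ and the non-empty conflict-free sets; $M\sqsubseteq R$ iff $M\subseteq R$ and no $t\in R\setminus M$ has $t\otimes t'$ for all $t'\in M$; $\mathcal X$ = all $\mathfrak X(s)$ and all support sets $M\sqsubseteq\mathfrak X(s)$. $\mathfrak A=T\cup\{t_\epsilon\}$ with fresh $t_\epsilon$, $\tau(t_\epsilon)=s_0$, $t_\epsilon\le t$ whenever $\sigma(t)=s_0$, never $t_\epsilon\ominus t$. Processes: $\mathfrak S=\mathcal X\times\mathfrak A$; initial process $(\mathfrak X(s_0),t_\epsilon)$. $\sim_{\mathrm{c}\mu}$: systems are equivalent iff their initial processes satisfy the same closed fixpoint-free formulas $\phi::=\mathrm{tt}\mid\neg\phi\mid\phi\wedge\phi\mid\langle a\rangle_c\phi\mid\langle a\rangle_{nc}\phi$, with $[\![\mathrm{tt}]\!]=\mathfrak S$, complement, intersection, $[\![\langle a\rangle_c\phi]\!]=\{(R,t):\exists r\in R.\ \delta(r)=a,\ t\le r,\ (\mathfrak X(\tau(r)),r)\in[\![\phi]\!]\}$, and $\langle a\rangle_{nc}$ likewise with $t\ominus r$. $\sim_{hpb}$: runs are finite sequences $[t_1,\dots,t_k]$ with $\sigma(t_1)=s_0$, $\sigma(t_{i+1})=\tau(t_i)$; $\varrho(\pi)$ is the last transition (empty run $\epsilon$ ends at $s_0$ and its "last transition" is independent of nothing). The labelled poset of a run: elements $1..k$ labelled $\delta(t_i)$, order the reflexive-transitive closure of $\{(i,j):i<j,\neg t_iIt_j\}$.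 $(\pi_1.u,\pi_2.v)$ is synchronous iff $(\varrho(\pi_1),u)\in I_1\Leftrightarrow(\varrho(\pi_2),v)\in I_2$ and the labelled posets of $\pi_1.u,\pi_2.v$ are isomorphic. hpb game from $(\epsilon,\epsilon)$: Adam picks a system and a transition $u$ from the end state of the current run there; Eve answers with an equally labelled transition $v$ from the end state of the current run in the other system so that the extended pair is synchronous; a player who cannot move loses, infinite plays are won by Eve. $\mathfrak T_1\sim_{hpb}\mathfrak T_2$ iff Eve has a winning strategy. *)

theory Defs
  imports Main
begin

type_synonym ('s,'a) trans = "'s \<times> 'a \<times> 's"

record ('s,'a) tsi =
  states :: "'s set"
  init   :: 's
  trans  :: "('s,'a) trans set"
  indep  :: "(('s,'a) trans \<times> ('s,'a) trans) set"
  labels :: "'a set"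

definition src :: "('s,'a) trans \<Rightarrow> 's" where "src t = fst t"
definition lab :: "('s,'a) trans \<Rightarrow> 'a" where "lab t = fst (snd t)"
definition tgt :: "('s,'a) trans \<Rightarrow> 's" where "tgt t = snd (snd t)"

definition prec :: "('s,'a,'x) tsi_scheme \<Rightarrow> (('s,'a) trans \<times> ('s,'a) trans) set" where
  "prec M = {((s,a,s1),(s2,a',q)) | s a s1 s2 a' q. a' = a \<and>
      (\<exists>b. ((s,a,s1),(s,b,s2)) \<in> indep M \<and> ((s,a,s1),(s1,b,q)) \<in> indep M
           \<and> ((s,b,s2),(s2,a,q)) \<in> indep M)}"

definition sim :: "('s,'a,'x) tsi_scheme \<Rightarrow> (('s,'a) trans \<times> ('s,'a) trans) set" where
  "sim M = (prec M \<union> (prec M)\<inverse>)\<^sup>*"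

definition is_system :: "('s,'a,'x) tsi_scheme \<Rightarrow> bool" where
  "is_system M \<longleftrightarrow>
     init M \<in> states M \<and>
     trans M \<subseteq> states M \<times> labels M \<times> states M \<and>
     indep M \<subseteq> trans M \<times> trans M \<and>
     irrefl (indep M) \<and> sym (indep M) \<and>
     (\<forall>s a s1 s2. ((s,a,s1),(s,a,s2)) \<in> sim M \<longrightarrow> s1 = s2) \<and>
     (\<forall>s a s1 b s2. ((s,a,s1),(s,b,s2)) \<in> indep M \<longrightarrow>
        (\<exists>q. ((s,a,s1),(s1,b,q)) \<in> indep M \<and> ((s,b,s2),(s2,a,q)) \<in> indep M)) \<and>
     (\<forall>s a s1 b q. ((s,a,s1),(s1,b,q)) \<in> indep M \<longrightarrow>
        (\<exists>s2. ((s,a,s1),(s,b,s2)) \<in> indep M \<and> ((s,b,s2),(s2,a,q)) \<in> indep M)) \<and>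
     (\<forall>t t'. (t,t') \<in> sim M \<longrightarrow> {u. (t,u) \<in> indep M} = {u. (t',u) \<in> indep M}) \<and>
     (\<forall>s a. finite {s'. (s,a,s') \<in> trans M})"

definition Xs :: "('s,'a,'x) tsi_scheme \<Rightarrow> 's \<Rightarrow> ('s,'a) trans set" where
  "Xs M s = {t \<in> trans M. src t = s}"

text \<open>Elements of the extended set A = T plus t_eps: None is t_eps, Some t is t.\<close>
fun leA :: "('s,'a,'x) tsi_scheme \<Rightarrow> ('s,'a) trans option \<Rightarrow> ('s,'a) trans \<Rightarrow> bool" where
  "leA M None r = (src r = init M)"
| "leA M (Some t) r = (tgt t = src r \<and> (t,r) \<notin> indep M)"

fun ominusA :: "('s,'a,'x) tsi_scheme \<Rightarrow> ('s,'a) trans option \<Rightarrow> ('s,'a) trans \<Rightarrow> bool" where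
  "ominusA M None r = False"
| "ominusA M (Some t) r = (tgt t = src r \<and> (t,r) \<in> indep M)"

datatype 'a form = TT | Neg "'a form" | Conj "'a form" "'a form"
  | DiaC 'a "'a form" | DiaNC 'a "'a form"

fun sat :: "('s,'a,'x) tsi_scheme \<Rightarrow> ('s,'a) trans set \<Rightarrow> ('s,'a) trans option \<Rightarrow> 'a form \<Rightarrow> bool" where
  "sat M R t TT = True"
| "sat M R t (Neg \<phi>) = (\<not> sat M R t \<phi>)"
| "sat M R t (Conj \<phi> \<psi>) = (sat M R t \<phi> \<and> sat M R t \<psi>)"
| "sat M R t (DiaC a \<phi>) = (\<exists>r\<in>R. lab r = a \<and> leA M t r \<and> sat M (Xs M (tgt r)) (Some r) \<phi>)"
| "sat M R t (DiaNC a \<phi>) = (\<exists>r\<in>R. lab r = a \<and> ominusA M t r \<and> sat M (Xs M (tgt r)) (Some r) \<phi>)"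

definition cmu_equiv :: "('s1,'a,'x1) tsi_scheme \<Rightarrow> ('s2,'a,'x2) tsi_scheme \<Rightarrow> bool" where
  "cmu_equiv M1 M2 \<longleftrightarrow>
     (\<forall>\<phi>. sat M1 (Xs M1 (init M1)) None \<phi> \<longleftrightarrow> sat M2 (Xs M2 (init M2)) None \<phi>)"

definition end_state :: "('s,'a,'x) tsi_scheme \<Rightarrow> ('s,'a) trans list \<Rightarrow> 's" where
  "end_state M \<pi> = (if \<pi> = [] then init M else tgt (last \<pi>))"

definition last_indep :: "('s,'a,'x) tsi_scheme \<Rightarrow> ('s,'a) trans list \<Rightarrow> ('s,'a) trans \<Rightarrow> bool" where
  "last_indep M \<pi> u = (\<pi> \<noteq> [] \<and> (last \<pi>, u) \<in> indep M)"

definition run_order :: "('s,'a,'x) tsi_scheme \<Rightarrow> ('s,'a) trans list \<Rightarrow> (nat \<times> nat) set" where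
  "run_order M \<pi> = {(i,j). i < j \<and> j < length \<pi> \<and> (\<pi>!i, \<pi>!j) \<notin> indep M}\<^sup>*"

definition poset_iso ::
  "('s1,'a,'x1) tsi_scheme \<Rightarrow> ('s1,'a) trans list \<Rightarrow> ('s2,'a,'x2) tsi_scheme \<Rightarrow> ('s2,'a) trans list \<Rightarrow> bool" where
  "poset_iso M1 \<pi>1 M2 \<pi>2 \<longleftrightarrow>
     (\<exists>f. bij_betw f {..<length \<pi>1} {..<length \<pi>2} \<and>
          (\<forall>i<length \<pi>1. lab (\<pi>2 ! f i) = lab (\<pi>1 ! i)) \<and>
          (\<forall>i<length \<pi>1. \<forall>j<length \<pi>1.
              (i,j) \<in> run_order M1 \<pi>1 \<longleftrightarrow> (f i, f j) \<in> run_order M2 \<pi>2))"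

definition synchronous ::
  "('s1,'a,'x1) tsi_scheme \<Rightarrow> ('s1,'a) trans list \<Rightarrow> ('s1,'a) trans \<Rightarrow>
   ('s2,'a,'x2) tsi_scheme \<Rightarrow> ('s2,'a) trans list \<Rightarrow> ('s2,'a) trans \<Rightarrow> bool" where
  "synchronous M1 \<pi>1 u M2 \<pi>2 v \<longleftrightarrow>
     (last_indep M1 \<pi>1 u \<longleftrightarrow> last_indep M2 \<pi>2 v) \<and>
     poset_iso M1 (\<pi>1 @ [u]) M2 (\<pi>2 @ [v])"

text \<open>A set of positions (pairs of runs) from which Eve can always answer Adam's move
  and stay in the set; Eve has a winning strategy from (eps,eps) iff such a set contains it.\<close>
definition hpb_invariant ::
  "('s1,'a,'x1) tsi_scheme \<Rightarrow> ('s2,'a,'x2) tsi_scheme \<Rightarrow>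
   (('s1,'a) trans list \<times> ('s2,'a) trans list) set \<Rightarrow> bool" where
  "hpb_invariant M1 M2 W \<longleftrightarrow>
     (\<forall>(\<pi>1,\<pi>2)\<in>W.
        (\<forall>u\<in>trans M1. src u = end_state M1 \<pi>1 \<longrightarrow>
           (\<exists>v\<in>trans M2. src v = end_state M2 \<pi>2 \<and> lab v = lab u \<and>
               synchronous M1 \<pi>1 u M2 \<pi>2 v \<and> (\<pi>1 @ [u], \<pi>2 @ [v]) \<in> W)) \<and>
        (\<forall>v\<in>trans M2. src v = end_state M2 \<pi>2 \<longrightarrow>
           (\<exists>u\<in>trans M1. src u = end_state M1 \<pi>1 \<and> lab u = lab v \<and>
               synchronous M1 \<pi>1 u M2 \<pi>2 v \<and> (\<pi>1 @ [u], \<pi>2 @ [v]) \<in> W)))"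

definition hpb_equiv :: "('s1,'a,'x1) tsi_scheme \<Rightarrow> ('s2,'a,'x2) tsi_scheme \<Rightarrow> bool" where
  "hpb_equiv M1 M2 \<longleftrightarrow> (\<exists>W. ([],[]) \<in> W \<and> hpb_invariant M1 M2 W)"

end

theory Submission
  imports Defs
begin

definition lo :: "'t list \<Rightarrow> 't option" where
  "lo p = (if p = [] then None else Some (last p))"

lemma iso_len:
  assumes "poset_iso M1 p1 M2 p2" shows "length p1 = length p2"
proof -
  from assms obtain f where "bij_betw f {..<length p1} {..<length p2}"
    unfolding poset_iso_def by blast
  from bij_betw_same_card[OF this] show ?thesis by simp
qed

lemma sync_len:
  assumes "synchronous M1 p1 u M2 p2 v" shows "length p1 = length p2"
  using iso_len[of M1 "p1@[u]" M2 "p2@[v]"] assms unfolding synchronous_def by simp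

lemma leA_transfer:
  assumes "synchronous M1 p1 u M2 p2 v" "src u = end_state M1 p1" "src v = end_state M2 p2"
  shows "leA M1 (lo p1) u = leA M2 (lo p2) v"
proof -
  have L: "length p1 = length p2" using sync_len[OF assms(1)] .
  have I: "last_indep M1 p1 u = last_indep M2 p2 v" using assms(1) unfolding synchronous_def by simp
  show ?thesis
  proof (cases "p1 = []")
    case True
    then have "p2 = []" using L by simp
    then show ?thesis using True assms(2,3) by (simp add: lo_def end_state_def)
  next
    case False
    then have "p2 \<noteq> []" using L by auto
    then show ?thesis using False assms(2,3) I by (simp add: lo_def end_state_def last_indep_def)
  qed
qed

lemma ominusA_transfer:
  assumes "synchronous M1 p1 u M2 p2 v" "src u = end_state M1 p1" "src v = end_state M2 p2"
  shows "ominusA M1 (lo p1) u = ominusA M2 (lo p2) v"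
proof -
  have L: "length p1 = length p2" using sync_len[OF assms(1)] .
  have I: "last_indep M1 p1 u = last_indep M2 p2 v" using assms(1) unfolding synchronous_def by simp
  show ?thesis
  proof (cases "p1 = []")
    case True
    then have "p2 = []" using L by simp
    then show ?thesis using True assms(2,3) by (simp add: lo_def end_state_def)
  next
    case False
    then have "p2 \<noteq> []" using L by auto
    then show ?thesis using False assms(2,3) I by (simp add: lo_def end_state_def last_indep_def)
  qed
qed

lemma lo_snoc: "lo (p @ [r]) = Some r" by (simp add: lo_def)
lemma end_snoc: "end_state M (p @ [r]) = tgt r" by (simp add: end_state_def)

lemma key:
  assumes H: "hpb_invariant M1 M2 W"
  shows "(p1,p2) \<in> W \<Longrightarrow> sat M1 (Xs M1 (end_state M1 p1)) (lo p1) \<phi> =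
                           sat M2 (Xs M2 (end_state M2 p2)) (lo p2) \<phi>"
proof (induction \<phi> arbitrary: p1 p2)
  case TT then show ?case by simp
next
  case (Neg \<phi>) then show ?case by simp
next
  case (Conj \<phi> \<psi>) then show ?case by simp
next
  case (DiaC a \<phi>)
  have G1: "\<forall>u\<in>trans M1. src u = end_state M1 p1 \<longrightarrow>
           (\<exists>v\<in>trans M2. src v = end_state M2 p2 \<and> lab v = lab u \<and>
               synchronous M1 p1 u M2 p2 v \<and> (p1 @ [u], p2 @ [v]) \<in> W)"
   and G2: "\<forall>v\<in>trans M2. src v = end_state M2 p2 \<longrightarrow>
           (\<exists>u\<in>trans M1. src u = end_state M1 p1 \<and> lab u = lab v \<and>
               synchronous M1 p1 u M2 p2 v \<and> (p1 @ [u], p2 @ [v]) \<in> W)"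
    using H DiaC.prems unfolding hpb_invariant_def by auto
  show ?case
  proof
    assume "sat M1 (Xs M1 (end_state M1 p1)) (lo p1) (DiaC a \<phi>)"
    then obtain r where r: "r \<in> trans M1" "src r = end_state M1 p1" "lab r = a" "leA M1 (lo p1) r"
      "sat M1 (Xs M1 (tgt r)) (Some r) \<phi>" by (auto simp: Xs_def)
    then obtain v where v: "v\<in>trans M2" "src v = end_state M2 p2" "lab v = lab r"
      "synchronous M1 p1 r M2 p2 v" "(p1 @ [r], p2 @ [v]) \<in> W" using G1 by blast
    have "sat M2 (Xs M2 (tgt v)) (Some v) \<phi>"
      using DiaC.IH[OF v(5)] r(5) by (simp add: lo_snoc end_snoc)
    moreover have "leA M2 (lo p2) v" using leA_transfer[OF v(4) r(2) v(2)] r(4) by simp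
    ultimately show "sat M2 (Xs M2 (end_state M2 p2)) (lo p2) (DiaC a \<phi>)"
      using v r unfolding sat.simps Xs_def by (intro bexI[of _ v]) auto
  next
    assume "sat M2 (Xs M2 (end_state M2 p2)) (lo p2) (DiaC a \<phi>)"
    then obtain v where v: "v \<in> trans M2" "src v = end_state M2 p2" "lab v = a" "leA M2 (lo p2) v"
      "sat M2 (Xs M2 (tgt v)) (Some v) \<phi>" by (auto simp: Xs_def)
    then obtain r where r: "r\<in>trans M1" "src r = end_state M1 p1" "lab r = lab v"
      "synchronous M1 p1 r M2 p2 v" "(p1 @ [r], p2 @ [v]) \<in> W" using G2 by blast
    have "sat M1 (Xs M1 (tgt r)) (Some r) \<phi>"
      using DiaC.IH[OF r(5)] v(5) by (simp add: lo_snoc end_snoc)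
    moreover have "leA M1 (lo p1) r" using leA_transfer[OF r(4) r(2) v(2)] v(4) by simp
    ultimately show "sat M1 (Xs M1 (end_state M1 p1)) (lo p1) (DiaC a \<phi>)"
      using v r unfolding sat.simps Xs_def by (intro bexI[of _ r]) auto
  qed
next
  case (DiaNC a \<phi>)
  have G1: "\<forall>u\<in>trans M1. src u = end_state M1 p1 \<longrightarrow>
           (\<exists>v\<in>trans M2. src v = end_state M2 p2 \<and> lab v = lab u \<and>
               synchronous M1 p1 u M2 p2 v \<and> (p1 @ [u], p2 @ [v]) \<in> W)"
   and G2: "\<forall>v\<in>trans M2. src v = end_state M2 p2 \<longrightarrow>
           (\<exists>u\<in>trans M1. src u = end_state M1 p1 \<and> lab u = lab v \<and>
               synchronous M1 p1 u M2 p2 v \<and> (p1 @ [u], p2 @ [v]) \<in> W)"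
    using H DiaNC.prems unfolding hpb_invariant_def by auto
  show ?case
  proof
    assume "sat M1 (Xs M1 (end_state M1 p1)) (lo p1) (DiaNC a \<phi>)"
    then obtain r where r: "r \<in> trans M1" "src r = end_state M1 p1" "lab r = a" "ominusA M1 (lo p1) r"
      "sat M1 (Xs M1 (tgt r)) (Some r) \<phi>" by (auto simp: Xs_def)
    then obtain v where v: "v\<in>trans M2" "src v = end_state M2 p2" "lab v = lab r"
      "synchronous M1 p1 r M2 p2 v" "(p1 @ [r], p2 @ [v]) \<in> W" using G1 by blast
    have "sat M2 (Xs M2 (tgt v)) (Some v) \<phi>"
      using DiaNC.IH[OF v(5)] r(5) by (simp add: lo_snoc end_snoc)
    moreover have "ominusA M2 (lo p2) v" using ominusA_transfer[OF v(4) r(2) v(2)] r(4) by simp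
    ultimately show "sat M2 (Xs M2 (end_state M2 p2)) (lo p2) (DiaNC a \<phi>)"
      using v r unfolding sat.simps Xs_def by (intro bexI[of _ v]) auto
  next
    assume "sat M2 (Xs M2 (end_state M2 p2)) (lo p2) (DiaNC a \<phi>)"
    then obtain v where v: "v \<in> trans M2" "src v = end_state M2 p2" "lab v = a" "ominusA M2 (lo p2) v"
      "sat M2 (Xs M2 (tgt v)) (Some v) \<phi>" by (auto simp: Xs_def)
    then obtain r where r: "r\<in>trans M1" "src r = end_state M1 p1" "lab r = lab v"
      "synchronous M1 p1 r M2 p2 v" "(p1 @ [r], p2 @ [v]) \<in> W" using G2 by blast
    have "sat M1 (Xs M1 (tgt r)) (Some r) \<phi>"
      using DiaNC.IH[OF r(5)] v(5) by (simp add: lo_snoc end_snoc)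
    moreover have "ominusA M1 (lo p1) r" using ominusA_transfer[OF r(4) r(2) v(2)] v(4) by simp
    ultimately show "sat M1 (Xs M1 (end_state M1 p1)) (lo p1) (DiaNC a \<phi>)"
      using v r unfolding sat.simps Xs_def by (intro bexI[of _ r]) auto
  qed
qed

theorem lemma1:
  fixes M1 :: "('s1,'a) tsi" and M2 :: "('s2,'a) tsi"
  assumes "is_system M1" and "is_system M2"
    and "hpb_equiv M1 M2"
  shows "cmu_equiv M1 M2"
proof -
  obtain W where W: "([],[]) \<in> W" "hpb_invariant M1 M2 W"
    using assms(3) unfolding hpb_equiv_def by blast
  show ?thesis unfolding cmu_equiv_def
    using key[OF W(2) W(1)] by (simp add: lo_def end_state_def)
qed

end
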